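(* Let $a\ge b\ge2$ be integers, $\beta>1$ the positive root of $\beta^2=a\beta+b$, and $\beta'=a-\beta$. Then for each $n\in\mathbb N$, \[ \inf_{j\in\mathbb Z}P_{\mathbf h(j)}(\beta')\in\Big\{\mu_n+(\beta')^n\tfrac{b-1}{1-(\beta')^2}\,t:\ t\in[\beta',1]\Big\}, \qquad \mu_n=\min_{j\in\{0,1,\dots,b^n-1\}}P_{\mathrm{Pref}_n(\mathbf h(j))}(\beta'). \]
   Context: For an algebraic integer $\beta$, the $\beta$-adic expansion of $x\in\mathbb Z[\beta]$ is the unique infinite word $\mathbf h(x)=u_0u_1u_2\cdots$ with $u_n\in\{0,1,\dots,|N(\beta)|-1\}$ such that $x-\sum_{i=0}^{n-1}u_i\beta^i\in\beta^n\mathbb Z[\beta]$ for all $n\in\mathbb N$; here $|N(\beta)|=b$. $\mathrm{Pref}_n(\mathbf u)$ denotes the prefix of length $n$ of an infinite word $\mathbf u$. For a finite word $w=w_0\cdots w_{k-1}$, $P_w(X)=\sum_{i=0}^{k-1}w_iX^i$; for an infinite word $\mathbf u$, $P_{\mathbf u}(X)=\sum_{i\ge0}u_iX^i$. *)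

theory Defs
  imports Complex_Main
begin

definition in_beta_pow_Zbeta :: "real \<Rightarrow> nat \<Rightarrow> real \<Rightarrow> bool" where
  "in_beta_pow_Zbeta \<beta> n y \<longleftrightarrow> (\<exists>p q :: int. y = \<beta> ^ n * (of_int p + of_int q * \<beta>))"

text \<open>u is a beta-adic expansion of x with digits in {0,...,b-1}, where b = |N(beta)|.\<close>
definition is_beta_expansion :: "real \<Rightarrow> nat \<Rightarrow> real \<Rightarrow> (nat \<Rightarrow> nat) \<Rightarrow> bool" where
  "is_beta_expansion \<beta> b x u \<longleftrightarrow>
     (\<forall>i. u i < b) \<and>
     (\<forall>n. in_beta_pow_Zbeta \<beta> n (x - (\<Sum>i<n. real (u i) * \<beta> ^ i)))"

definition beta_exp :: "real \<Rightarrow> nat \<Rightarrow> real \<Rightarrow> (nat \<Rightarrow> nat)" where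
  "beta_exp \<beta> b x = (THE u. is_beta_expansion \<beta> b x u)"

definition pref_poly :: "(nat \<Rightarrow> nat) \<Rightarrow> nat \<Rightarrow> real \<Rightarrow> real" where
  "pref_poly u n X = (\<Sum>i<n. real (u i) * X ^ i)"

definition word_series :: "(nat \<Rightarrow> nat) \<Rightarrow> real \<Rightarrow> real" where
  "word_series u X = (\<Sum>i. real (u i) * X ^ i)"

end

theory Submission imports Defs begin

locale bq = fixes a b :: nat and \<beta> :: real
  assumes b2: "b \<ge> 2" and ab: "a \<ge> b" and b1: "\<beta> > 1"
    and eq: "\<beta>^2 = real a * \<beta> + real b"
begin

lemma eq2: "\<beta> * (\<beta> - real a) = real b"
  using eq by (simp add: power2_eq_square algebra_simps)

lemma beta_gt_a: "\<beta> > real a"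
proof -
  have "\<beta> * (\<beta> - real a) > 0" using eq2 b2 by simp
  then show ?thesis using b1 by (simp add: zero_less_mult_iff)
qed

lemma beta_lt: "\<beta> < real a + 1"
proof -
  have "\<beta> * (\<beta> - real a) < \<beta> * 1" using eq2 ab beta_gt_a by simp
  then show ?thesis using b1 by simp
qed

lemma irr: "q > 0 \<Longrightarrow> real q * \<beta> \<noteq> of_int m"
proof (induction q arbitrary: m rule: less_induct)
  case (less q)
  show ?case
  proof
    assume h: "real q * \<beta> = of_int m"
    define q' where "q' = m - int q * int a"
    have e: "real_of_int q' = real q * (\<beta> - real a)" using h by (simp add: q'_def algebra_simps)
    have "real q * (\<beta> - real a) > 0" using less.prems beta_gt_a by simp
    then have q1: "q' > 0" using e by linarith
    have "real q * (\<beta> - real a) < real q * 1" using less.prems beta_lt by simp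
    then have q2: "q' < int q" using e by linarith
    have nq: "real (nat q') = real_of_int q'" using q1 by simp
    have "real (nat q') * \<beta> = real q * (\<beta> * (\<beta> - real a))" unfolding nq e by (simp add: mult_ac)
    also have "\<dots> = of_int (int q * int b)" using eq2 by simp
    finally have "real (nat q') * \<beta> = of_int (int q * int b)" .
    moreover have "nat q' < q" "nat q' > 0" using q1 q2 by auto
    ultimately show False using less.IH by blast
  qed
qed

lemma lin_indep: assumes "of_int r + of_int s * \<beta> = 0" shows "r = 0 \<and> s = 0"
proof (cases "s = 0")
  case True then show ?thesis using assms by simp
next
  case False
  show ?thesis
  proof (cases "s > 0")
    case True
    have "real (nat s) * \<beta> = of_int (- r)" using assms True by (simp add: algebra_simps)
    then show ?thesis using irr[of "nat s" "-r"] True by simp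
  next
    case f: False
    have "real (nat (-s)) * \<beta> = of_int r" using assms f False by (simp add: algebra_simps)
    then show ?thesis using irr[of "nat (-s)" "r"] f False by simp
  qed
qed

definition Zb :: "real \<Rightarrow> bool" where "Zb y \<longleftrightarrow> (\<exists>p q::int. y = of_int p + of_int q * \<beta>)"

lemma Zb_int[simp]: "Zb (of_int m)" unfolding Zb_def by (rule exI[of _ m], rule exI[of _ 0], simp)
lemma Zb_nat[simp]: "Zb (real m)" using Zb_int[of "int m"] by simp
lemma Zb_beta[simp]: "Zb \<beta>" unfolding Zb_def by (rule exI[of _ 0], rule exI[of _ 1], simp)
lemma Zb_add[simp]: "Zb x \<Longrightarrow> Zb y \<Longrightarrow> Zb (x + y)"
proof -
  assume "Zb x" "Zb y"
  then obtain p q r s where x: "x = of_int p + of_int q * \<beta>" and y: "y = of_int r + of_int s * \<beta>"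
    unfolding Zb_def by blast
  have "x + y = of_int (p+r) + of_int (q+s) * \<beta>" unfolding x y by (simp add: algebra_simps)
  then show ?thesis unfolding Zb_def by blast
qed
lemma Zb_minus[simp]: "Zb x \<Longrightarrow> Zb (- x)"
proof -
  assume "Zb x"
  then obtain p q where x: "x = of_int p + of_int q * \<beta>" unfolding Zb_def by blast
  have "- x = of_int (-p) + of_int (-q) * \<beta>" unfolding x by (simp add: algebra_simps)
  then show ?thesis unfolding Zb_def by blast
qed
lemma Zb_diff[simp]: "Zb x \<Longrightarrow> Zb y \<Longrightarrow> Zb (x - y)"
  using Zb_add[of x "-y"] by simp
lemma Zb_mult[simp]: "Zb x \<Longrightarrow> Zb y \<Longrightarrow> Zb (x * y)"
proof -
  assume "Zb x" "Zb y"
  then obtain p q r s where x: "x = of_int p + of_int q * \<beta>" and y: "y = of_int r + of_int s * \<beta>"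
    unfolding Zb_def by blast
  have bb: "\<beta> * \<beta> = real a * \<beta> + real b" using eq by (simp add: power2_eq_square)
  have "x * y = of_int p * of_int r + (of_int p * of_int s + of_int q * of_int r) * \<beta> + of_int q * of_int s * (\<beta> * \<beta>)"
    unfolding x y by (simp add: algebra_simps)
  also have "\<dots> = of_int (p*r + q*s*int b) + of_int (p*s + q*r + q*s*int a) * \<beta>"
    unfolding bb by (simp add: algebra_simps)
  finally show "Zb (x*y)" unfolding Zb_def by blast
qed
lemma Zb_pow[simp]: "Zb x \<Longrightarrow> Zb (x ^ n)"
  by (induction n) (simp_all add: Zb_int[of 1, simplified])
lemma Zb_sum: "(\<And>i. i \<in> A \<Longrightarrow> Zb (f i)) \<Longrightarrow> Zb (sum f A)"
  by (induction A rule: infinite_finite_induct) (auto simp: Zb_int[of 0, simplified])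

lemma ibp: "in_beta_pow_Zbeta \<beta> n y \<longleftrightarrow> (\<exists>z. Zb z \<and> y = \<beta> ^ n * z)"
  unfolding in_beta_pow_Zbeta_def Zb_def by blast

lemma dvd_lemma: assumes "Zb w" "\<beta> * w = of_int c" shows "int b dvd c"
proof -
  obtain p q where w: "w = of_int p + of_int q * \<beta>" using assms unfolding Zb_def by blast
  have bb: "\<beta> * \<beta> = real a * \<beta> + real b" using eq by (simp add: power2_eq_square)
  have "\<beta> * w = of_int p * \<beta> + of_int q * (\<beta> * \<beta>)" unfolding w by (simp add: algebra_simps)
  also have "\<dots> = of_int (q * int b) + of_int (p + q * int a) * \<beta>" unfolding bb by (simp add: algebra_simps)
  finally have "of_int (q * int b - c) + of_int (p + q * int a) * \<beta> = 0" using assms by simp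
  then have "q * int b - c = 0" using lin_indep by blast
  then show ?thesis by (metis dvd_triv_right eq_iff_diff_eq_0)
qed

lemma digit_zero: assumes "Zb w" "\<beta> * w = of_int c" "\<bar>c\<bar> < int b" shows "c = 0"
proof (rule ccontr)
  assume "c \<noteq> 0"
  then have "\<bar>int b\<bar> \<le> \<bar>c\<bar>" using dvd_lemma[OF assms(1,2)] dvd_imp_le_int by blast
  then show False using assms(3) by simp
qed

lemma Zb_poly: "Zb (\<Sum>i<n. of_int (e i) * \<beta> ^ i)"
  by (rule Zb_sum) simp

lemma uniq:
  assumes "\<forall>i. u i < b" "\<forall>i. v i < b"
    "in_beta_pow_Zbeta \<beta> n (\<Sum>i<n. (real (u i) - real (v i)) * \<beta> ^ i)"
  shows "\<forall>i<n. u i = v i"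
  using assms
proof (induction n arbitrary: u v)
  case 0 then show ?case by simp
next
  case (Suc n)
  define e where "e i = int (u i) - int (v i)" for i
  have ee: "real (u i) - real (v i) = of_int (e i)" for i unfolding e_def by simp
  obtain z where z: "Zb z" and S: "(\<Sum>i<Suc n. of_int (e i) * \<beta> ^ i) = \<beta> ^ Suc n * z"
    using Suc.prems(3) unfolding ibp ee by blast
  define S' where "S' = (\<Sum>i<n. of_int (e (Suc i)) * \<beta> ^ i)"
  have split: "(\<Sum>i<Suc n. of_int (e i) * \<beta> ^ i) = of_int (e 0) + \<beta> * S'"
    unfolding S'_def sum.lessThan_Suc_shift by (simp add: sum_distrib_left mult_ac)
  have "\<beta> * (\<beta> ^ n * z - S') = of_int (e 0)" using S split by (simp add: algebra_simps)
  moreover have "Zb (\<beta> ^ n * z - S')" unfolding S'_def using z Zb_poly by simp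
  moreover have "\<bar>e 0\<bar> < int b" unfolding e_def using Suc.prems(1,2)[rule_format, of 0] by (auto simp: abs_if)
  ultimately have e0: "e 0 = 0" using digit_zero by blast
  then have "\<beta> * S' = \<beta> * (\<beta> ^ n * z)" using S split by (simp del: sum.lessThan_Suc)
  then have "S' = \<beta> ^ n * z" using b1 by simp
  then have "in_beta_pow_Zbeta \<beta> n (\<Sum>i<n. (real (u (Suc i)) - real (v (Suc i))) * \<beta> ^ i)"
    unfolding ibp ee S'_def using z by blast
  then have IH: "\<forall>i<n. u (Suc i) = v (Suc i)" using Suc.IH[of "u \<circ> Suc" "v \<circ> Suc"] Suc.prems by simp
  show ?case
  proof (intro allI impI)
    fix i assume "i < Suc n"
    then show "u i = v i" using IH e0 unfolding e_def by (cases i) auto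
  qed
qed

lemma expansion_unique:
  assumes "is_beta_expansion \<beta> b x u" "is_beta_expansion \<beta> b x v" shows "u = v"
proof
  fix i
  have bu: "\<forall>i. u i < b" and bv: "\<forall>i. v i < b" using assms unfolding is_beta_expansion_def by auto
  obtain z1 where z1: "Zb z1" "x - (\<Sum>k<Suc i. real (u k) * \<beta> ^ k) = \<beta> ^ Suc i * z1"
    using assms(1) unfolding is_beta_expansion_def ibp by blast
  obtain z2 where z2: "Zb z2" "x - (\<Sum>k<Suc i. real (v k) * \<beta> ^ k) = \<beta> ^ Suc i * z2"
    using assms(2) unfolding is_beta_expansion_def ibp by blast
  have "(\<Sum>k<Suc i. (real (u k) - real (v k)) * \<beta> ^ k) = \<beta> ^ Suc i * (z2 - z1)"
    using z1(2) z2(2) by (simp add: algebra_simps sum_subtractf)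
  then have "in_beta_pow_Zbeta \<beta> (Suc i) (\<Sum>k<Suc i. (real (u k) - real (v k)) * \<beta> ^ k)"
    unfolding ibp using z1(1) z2(1) Zb_diff by blast
  then show "u i = v i" using uniq[OF bu bv] by blast
qed

fun T :: "int \<times> int \<Rightarrow> int \<times> int" where
  "T (p, q) = (q - int a * (p div int b), p div int b)"

definition val :: "int \<times> int \<Rightarrow> real" where "val x = of_int (fst x) + of_int (snd x) * \<beta>"

definition st :: "int \<times> int \<Rightarrow> nat \<Rightarrow> int \<times> int" where "st x n = (T ^^ n) x"

definition dig :: "int \<times> int \<Rightarrow> nat \<Rightarrow> nat" where "dig x n = nat (fst (st x n) mod int b)"

lemma val_step: "val x = of_int (fst x mod int b) + \<beta> * val (T x)"
proof -
  obtain p q where x: "x = (p, q)" by (cases x)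
  have bb: "\<beta> * \<beta> = real a * \<beta> + real b" using eq by (simp add: power2_eq_square)
  have "\<beta> * val (T x) = of_int q * \<beta> + of_int (p div int b) * (\<beta> * \<beta> - real a * \<beta>)"
    unfolding x val_def by (simp add: algebra_simps)
  also have "\<dots> = of_int q * \<beta> + of_int (p div int b * int b)" unfolding bb by simp
  finally have "\<beta> * val (T x) = of_int q * \<beta> + of_int (p div int b * int b)" .
  moreover have "p = p mod int b + p div int b * int b" by simp
  then have "real_of_int p = of_int (p mod int b) + of_int (p div int b * int b)" by (metis of_int_add)
  ultimately show ?thesis unfolding x val_def by simp
qed

lemma dig_real: "real (dig x n) = of_int (fst (st x n) mod int b)"
  unfolding dig_def using b2 by simp

lemma st_Suc: "st x (Suc n) = T (st x n)" unfolding st_def by simp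

lemma exp_rem: "val x - (\<Sum>i<n. real (dig x i) * \<beta> ^ i) = \<beta> ^ n * val (st x n)"
proof (induction n)
  case 0 then show ?case by (simp add: st_def)
next
  case (Suc n)
  have "val x - (\<Sum>i<Suc n. real (dig x i) * \<beta> ^ i) = \<beta> ^ n * val (st x n) - real (dig x n) * \<beta> ^ n"
    using Suc by simp
  also have "\<dots> = \<beta> ^ Suc n * val (st x (Suc n))"
    using val_step[of "st x n"] unfolding dig_real st_Suc by (simp add: algebra_simps)
  finally show ?case .
qed

lemma exp_exists: "is_beta_expansion \<beta> b (val x) (dig x)"
  unfolding is_beta_expansion_def ibp
proof (intro conjI allI)
  fix i show "dig x i < b" unfolding dig_def using b2
    by (simp add: nat_less_iff)
next
  fix n show "\<exists>z. Zb z \<and> val x - (\<Sum>i<n. real (dig x i) * \<beta> ^ i) = \<beta> ^ n * z"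
    using exp_rem by (metis Zb_def val_def)
qed

lemma beta_exp_int: "is_beta_expansion \<beta> b (of_int j) (beta_exp \<beta> b (of_int j))"
proof -
  have "of_int j = val (j, 0)" unfolding val_def by simp
  then have "is_beta_expansion \<beta> b (of_int j) (dig (j,0))" using exp_exists by metis
  then show ?thesis unfolding beta_exp_def
    using theI[of "is_beta_expansion \<beta> b (of_int j)" "dig (j,0)"] expansion_unique by blast
qed

lemma pref_eq:
  assumes "int b ^ n dvd (j - k)"
  shows "\<forall>i<n. beta_exp \<beta> b (of_int j) i = beta_exp \<beta> b (of_int k) i"
proof -
  let ?u = "beta_exp \<beta> b (of_int j)" and ?v = "beta_exp \<beta> b (of_int k)"
  have bu: "\<forall>i. ?u i < b" and bv: "\<forall>i. ?v i < b" using beta_exp_int unfolding is_beta_expansion_def by auto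
  obtain z1 where z1: "Zb z1" "of_int j - (\<Sum>i<n. real (?u i) * \<beta> ^ i) = \<beta> ^ n * z1"
    using beta_exp_int[of j] unfolding is_beta_expansion_def ibp by blast
  obtain z2 where z2: "Zb z2" "of_int k - (\<Sum>i<n. real (?v i) * \<beta> ^ i) = \<beta> ^ n * z2"
    using beta_exp_int[of k] unfolding is_beta_expansion_def ibp by blast
  obtain m where m: "j - k = int b ^ n * m" using assms by (auto elim: dvdE)
  have "real b ^ n = \<beta> ^ n * (\<beta> - real a) ^ n" using eq2 by (metis power_mult_distrib)
  then have jk: "real_of_int j - of_int k = \<beta> ^ n * ((\<beta> - real a) ^ n * of_int m)"
    using m by (metis (mono_tags, opaque_lifting) mult.assoc of_int_diff of_int_mult of_int_of_nat_eq of_int_power)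
  have "(\<Sum>i<n. (real (?u i) - real (?v i)) * \<beta> ^ i) = \<beta> ^ n * ((\<beta> - real a) ^ n * of_int m - z1 + z2)"
    using z1(2) z2(2) jk by (simp add: algebra_simps sum_subtractf)
  then have "in_beta_pow_Zbeta \<beta> n (\<Sum>i<n. (real (?u i) - real (?v i)) * \<beta> ^ i)"
    unfolding ibp using z1(1) z2(1) by (metis Zb_add Zb_diff Zb_mult Zb_pow Zb_beta Zb_nat Zb_int)
  then show ?thesis using uniq[OF bu bv] by blast
qed

end

lemma pw_bound:
  fixes d K y :: real assumes "0 \<le> d" "d \<le> K"
  shows "d * y \<le> K / 2 * (y + \<bar>y\<bar>)" "K / 2 * (y - \<bar>y\<bar>) \<le> d * y"
proof -
  show "d * y \<le> K / 2 * (y + \<bar>y\<bar>)"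
  proof (cases "y \<ge> 0")
    case True then show ?thesis using assms mult_right_mono[of d K y] by simp
  next
    case False then show ?thesis using assms by (simp add: mult_nonneg_nonpos)
  qed
  show "K / 2 * (y - \<bar>y\<bar>) \<le> d * y"
  proof (cases "y \<ge> 0")
    case True then show ?thesis using assms by simp
  next
    case False then show ?thesis using assms mult_right_mono_neg[of d K y] by simp
  qed
qed

lemma series_bounds:
  fixes x :: real assumes x: "-1 < x" "x < 0" and d: "\<forall>i. d i < B"
  shows "summable (\<lambda>i. real (d i) * x ^ i)"
    and "(real B - 1) * x / (1 - x^2) \<le> word_series d x"
    and "word_series d x \<le> (real B - 1) / (1 - x^2)"
proof -
  define K where "K = real B - 1"
  have dK: "0 \<le> real (d i)" "real (d i) \<le> K" for i using d[rule_format, of i] unfolding K_def by auto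
  have ax: "\<bar>x\<bar> ^ i = \<bar>x ^ i\<bar>" for i by (simp add: power_abs)
  have g1: "(\<lambda>i. x ^ i) sums (1 / (1 - x))" using geometric_sums[of x] x by simp
  have g2: "(\<lambda>i. \<bar>x\<bar> ^ i) sums (1 / (1 - \<bar>x\<bar>))" using geometric_sums[of "\<bar>x\<bar>"] x by simp
  have g2': "(\<lambda>i. \<bar>x ^ i\<bar>) sums (1 / (1 + x))" using g2 x unfolding ax by simp
  show sm: "summable (\<lambda>i. real (d i) * x ^ i)"
  proof (rule summable_comparison_test)
    show "\<exists>N. \<forall>n\<ge>N. norm (real (d n) * x ^ n) \<le> K * \<bar>x ^ n\<bar>"
      using dK by (auto simp: abs_mult intro!: mult_right_mono)
    show "summable (\<lambda>n. K * \<bar>x ^ n\<bar>)" using g2' by (intro summable_mult) (rule sums_summable)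
  qed
  have s: "(\<lambda>i. real (d i) * x ^ i) sums word_series d x" unfolding word_series_def using sm by (rule summable_sums)
  have up: "(\<lambda>i. K / 2 * (x ^ i + \<bar>x ^ i\<bar>)) sums (K / 2 * (1 / (1 - x) + 1 / (1 + x)))"
    by (intro sums_mult sums_add g1 g2')
  have lw: "(\<lambda>i. K / 2 * (x ^ i - \<bar>x ^ i\<bar>)) sums (K / 2 * (1 / (1 - x) - 1 / (1 + x)))"
    by (intro sums_mult sums_diff g1 g2')
  have e1: "K / 2 * (1 / (1 - x) + 1 / (1 + x)) = K / (1 - x^2)"
    using x by (simp add: field_simps power2_eq_square)
  have e2: "K / 2 * (1 / (1 - x) - 1 / (1 + x)) = K * x / (1 - x^2)"
    using x by (simp add: field_simps power2_eq_square)
  have "word_series d x \<le> K / 2 * (1 / (1 - x) + 1 / (1 + x))"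
    by (rule sums_le[OF _ s up]) (rule pw_bound(1)[OF dK])
  then have "word_series d x \<le> K / (1 - x^2)" by (simp only: e1)
  then show "word_series d x \<le> (real B - 1) / (1 - x^2)" by (simp only: K_def)
  have "K / 2 * (1 / (1 - x) - 1 / (1 + x)) \<le> word_series d x"
    by (rule sums_le[OF _ lw s]) (rule pw_bound(2)[OF dK])
  then have "K * x / (1 - x^2) \<le> word_series d x" by (simp only: e2)
  then show "(real B - 1) * x / (1 - x^2) \<le> word_series d x" by (simp only: K_def)
qed

lemma minmax:
  fixes y lo hi T :: real assumes "lo \<le> T" "T \<le> hi"
  shows "min (y * lo) (y * hi) \<le> y * T \<and> y * T \<le> max (y * lo) (y * hi)"
proof (cases "y \<ge> 0")
  case True
  then have "y * lo \<le> y * T" "y * T \<le> y * hi" using assms by (auto intro: mult_left_mono)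
  then show ?thesis by auto
next
  case False
  then have "y * T \<le> y * lo" "y * hi \<le> y * T" using assms by (auto intro: mult_left_mono_neg)
  then show ?thesis by auto
qed

theorem proposition4:
  fixes a b :: nat and \<beta> :: real and n :: nat
  assumes "b \<ge> 2" and "a \<ge> b" and "\<beta> > 1" and "\<beta> ^ 2 = real a * \<beta> + real b"
  defines "\<beta>' \<equiv> real a - \<beta>"
  defines "\<mu> \<equiv> Min ((\<lambda>j::nat. pref_poly (beta_exp \<beta> b (real j)) n \<beta>') ` {0..<b ^ n})"
  shows "(INF j::int. word_series (beta_exp \<beta> b (of_int j)) \<beta>')
           \<in> {\<mu> + \<beta>' ^ n * ((real b - 1) / (1 - \<beta>' ^ 2)) * t | t. t \<in> {\<beta>'..1}}"
proof -
  interpret bq a b \<beta> using assms(1-4) by unfold_locales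
  have bp: "-1 < \<beta>'" "\<beta>' < 0" using beta_gt_a beta_lt unfolding \<beta>'_def by auto
  define h where "h j = beta_exp \<beta> b (of_int j)" for j :: int
  have hb: "\<forall>i. h j i < b" for j using beta_exp_int[of j] unfolding h_def is_beta_expansion_def by auto
  define K where "K = real b - 1"
  define lo where "lo = K * \<beta>' / (1 - \<beta>'^2)"
  define hi where "hi = K / (1 - \<beta>'^2)"
  define m where "m = min (\<beta>'^n * lo) (\<beta>'^n * hi)"
  define M where "M = max (\<beta>'^n * lo) (\<beta>'^n * hi)"
  have decomp: "word_series (h j) \<beta>' = pref_poly (h j) n \<beta>' + \<beta>'^n * word_series (\<lambda>i. h j (i+n)) \<beta>'" for j
  proof -
    have s1: "summable (\<lambda>i. real (h j i) * \<beta>' ^ i)" using series_bounds(1)[OF bp hb] .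
    have s2: "summable (\<lambda>i. real (h j (i+n)) * \<beta>' ^ i)" using series_bounds(1)[OF bp, of "\<lambda>i. h j (i+n)" b] hb by blast
    have "(\<Sum>i. real (h j (i+n)) * \<beta>' ^ (i+n)) = (\<Sum>i. \<beta>'^n * (real (h j (i+n)) * \<beta>' ^ i))"
      by (simp add: power_add mult_ac)
    also have "\<dots> = \<beta>'^n * word_series (\<lambda>i. h j (i+n)) \<beta>'" unfolding word_series_def using s2 by (rule suminf_mult)
    finally show ?thesis unfolding word_series_def pref_poly_def
      using suminf_split_initial_segment[OF s1, of n] by (simp add: word_series_def)
  qed
  have tail: "m \<le> \<beta>'^n * word_series (\<lambda>i. h j (i+n)) \<beta>' \<and> \<beta>'^n * word_series (\<lambda>i. h j (i+n)) \<beta>' \<le> M" for j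
  proof -
    have "lo \<le> word_series (\<lambda>i. h j (i+n)) \<beta>'" "word_series (\<lambda>i. h j (i+n)) \<beta>' \<le> hi"
      using series_bounds(2,3)[OF bp, of "\<lambda>i. h j (i+n)" b] hb unfolding lo_def hi_def K_def by auto
    then show ?thesis unfolding m_def M_def by (rule minmax)
  qed
  have bn: "b ^ n > 0" using assms(1) by simp
  have pref_ge: "\<mu> \<le> pref_poly (h j) n \<beta>'" for j
  proof -
    define j' where "j' = nat (j mod int (b^n))"
    have j'i: "int j' = j mod int (b^n)" unfolding j'_def using bn by simp
    have "j' < b ^ n" unfolding j'_def using bn by (simp add: nat_less_iff)
    have "int b ^ n dvd (j - int j')" unfolding j'i by (simp add: minus_mod_eq_mult_div)
    then have "\<forall>i<n. h j i = beta_exp \<beta> b (real j') i" using pref_eq[of n j "int j'"] unfolding h_def by simp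
    then have "pref_poly (h j) n \<beta>' = pref_poly (beta_exp \<beta> b (real j')) n \<beta>'"
      unfolding pref_poly_def by (intro sum.cong) auto
    then show ?thesis unfolding \<mu>_def using \<open>j' < b ^ n\<close> by (simp add: Min_le)
  qed
  have "\<mu> \<in> (\<lambda>j::nat. pref_poly (beta_exp \<beta> b (real j)) n \<beta>') ` {0..<b ^ n}"
    unfolding \<mu>_def using bn by (intro Min_in) auto
  then obtain j0 where j0: "\<mu> = pref_poly (h (int j0)) n \<beta>'" unfolding h_def by auto
  let ?I = "(INF j::int. word_series (beta_exp \<beta> b (of_int j)) \<beta>')"
  have lowj: "\<mu> + m \<le> word_series (beta_exp \<beta> b (of_int j)) \<beta>'" for j
    using decomp[of j] tail[of j] pref_ge[of j] unfolding h_def by simp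
  have L: "\<mu> + m \<le> ?I" by (rule cINF_greatest) (auto intro: lowj)
  have "?I \<le> word_series (beta_exp \<beta> b (of_int (int j0))) \<beta>'"
    by (rule cINF_lower) (auto intro: lowj simp: bdd_below_def)
  also have "\<dots> \<le> \<mu> + M" using decomp[of "int j0"] tail[of "int j0"] j0 unfolding h_def by simp
  finally have U: "?I \<le> \<mu> + M" .
  define c where "c = \<beta>' ^ n * ((real b - 1) / (1 - \<beta>' ^ 2))"
  have sq: "\<beta>'^2 < 1" using bp by (simp add: abs_square_less_1)
  have "c \<noteq> 0" unfolding c_def using bp assms(1) sq by auto
  have chi: "\<beta>'^n * hi = c" and clo: "\<beta>'^n * lo = c * \<beta>'" unfolding c_def hi_def lo_def K_def by (auto simp: field_simps)
  define t where "t = (?I - \<mu>) / c"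
  have It: "?I = \<mu> + c * t" unfolding t_def using \<open>c \<noteq> 0\<close> by simp
  have "\<beta>' \<le> t \<and> t \<le> 1"
  proof (cases "c > 0")
    case True
    then have "c * \<beta>' \<le> c" using bp by (simp add: mult_left_le)
    then have "m = c * \<beta>'" "M = c" unfolding m_def M_def chi clo by auto
    then have "c * \<beta>' \<le> c * t" "c * t \<le> c * 1" using L U It by auto
    then show ?thesis using True by auto
  next
    case False
    then have cn: "c < 0" using \<open>c \<noteq> 0\<close> by simp
    then have "c \<le> c * \<beta>'" using bp by (simp add: mult_le_cancel_left_neg)
    then have "m = c" "M = c * \<beta>'" unfolding m_def M_def chi clo by auto
    then have "c * 1 \<le> c * t" "c * t \<le> c * \<beta>'" using L U It by auto
    then show ?thesis using cn by (auto simp: mult_le_cancel_left)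
  qed
  then show ?thesis using It unfolding c_def by auto
qed

end
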